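(* Let $n$ be an odd integer with $n>1$, and let $\mathcal{A}=(Q,A,\delta,q_0,F)$ be a circular semi-flower automaton with $|Q|=n$. Let $b\in A$. If the cycle formed by the $b$-edges of $\mathcal{A}$ has length $2$, then $\mathcal{A}$ is synchronizing.
   Context: An automaton over a finite alphabet $A$ is a quintuple $\mathcal{A}=(Q,A,\delta,q_0,F)$ with $Q$ a non-empty finite set of states, initial state $q_0\in Q$, set of final states $F\subseteq Q$, and total transition function $\delta:Q\times A\to Q$, extended to words in the usual way; each letter thus induces a transformation of $Q$. Its digraph has vertex set $Q$ and, for each $p\in Q$, $a\in A$, an edge labeled $a$ (an $a$-edge) from $p$ to $\delta(p,a)$. A path is an alternating sequence of distinct vertices and edges, each edge going from the preceding vertex to the next; a cycle is a path with at least one edge whose initial and terminal vertices coincide. A state $q$ is accessible if there is a path from $q_0$ to $q$, and co-accessible if there is a path from $q$ to a final state. $\mathcal{A}$ is a semi-flower automaton if $F=\{q_0\}$, every state is accessible and co-accessible, and every cycle passes through $q_0$. $\mathcal{A}$ is circular if some letter induces a circular permutation (a single cycle of length $|Q|$) on $Q$. In a semi-flower automaton, the sub-digraph formed by the $b$-edges (for a fixed letter $b$) contains exactly one cycle, called the $b$-cycle. $\mathcal{A}$ is synchronizing if there is a word $w\in A^*$ such that $\{\delta(q,w): q\in Q\}$ is a singleton. *)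

theory Defs
  imports Main
begin

definition automaton :: "'q set \<Rightarrow> 'a set \<Rightarrow> ('q \<Rightarrow> 'a \<Rightarrow> 'q) \<Rightarrow> 'q \<Rightarrow> 'q set \<Rightarrow> bool" where
  "automaton Q A \<delta> q0 F \<longleftrightarrow> finite Q \<and> Q \<noteq> {} \<and> finite A \<and> q0 \<in> Q \<and> F \<subseteq> Q \<and>
     (\<forall>p\<in>Q. \<forall>a\<in>A. \<delta> p a \<in> Q)"

definition delta_star :: "('q \<Rightarrow> 'a \<Rightarrow> 'q) \<Rightarrow> 'q \<Rightarrow> 'a list \<Rightarrow> 'q" where
  "delta_star \<delta> q w = foldl \<delta> q w"

text \<open>Edge relation of the digraph restricted to edges labelled by letters in a set L.
  Using L = A gives the digraph of the automaton; L = {b} gives the sub-digraph of b-edges.\<close>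
definition edge :: "'q set \<Rightarrow> 'a set \<Rightarrow> ('q \<Rightarrow> 'a \<Rightarrow> 'q) \<Rightarrow> 'q \<Rightarrow> 'q \<Rightarrow> bool" where
  "edge Q L \<delta> p q \<longleftrightarrow> p \<in> Q \<and> (\<exists>a\<in>L. \<delta> p a = q)"

definition is_walk :: "'q set \<Rightarrow> 'a set \<Rightarrow> ('q \<Rightarrow> 'a \<Rightarrow> 'q) \<Rightarrow> 'q list \<Rightarrow> bool" where
  "is_walk Q L \<delta> vs \<longleftrightarrow> vs \<noteq> [] \<and> set vs \<subseteq> Q \<and>
     (\<forall>i. Suc i < length vs \<longrightarrow> edge Q L \<delta> (vs ! i) (vs ! Suc i))"

definition is_path :: "'q set \<Rightarrow> 'a set \<Rightarrow> ('q \<Rightarrow> 'a \<Rightarrow> 'q) \<Rightarrow> 'q list \<Rightarrow> bool" where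
  "is_path Q L \<delta> vs \<longleftrightarrow> is_walk Q L \<delta> vs \<and> distinct vs"

text \<open>A cycle: at least one edge, first vertex = last vertex, otherwise vertices distinct.
  Its length is the number of edges, i.e. length vs - 1.\<close>
definition is_cycle :: "'q set \<Rightarrow> 'a set \<Rightarrow> ('q \<Rightarrow> 'a \<Rightarrow> 'q) \<Rightarrow> 'q list \<Rightarrow> bool" where
  "is_cycle Q L \<delta> vs \<longleftrightarrow> is_walk Q L \<delta> vs \<and> length vs \<ge> 2 \<and> hd vs = last vs \<and>
     distinct (butlast vs)"

definition accessible :: "'q set \<Rightarrow> 'a set \<Rightarrow> ('q \<Rightarrow> 'a \<Rightarrow> 'q) \<Rightarrow> 'q \<Rightarrow> 'q \<Rightarrow> bool" where
  "accessible Q A \<delta> q0 q \<longleftrightarrow> (\<exists>vs. is_path Q A \<delta> vs \<and> hd vs = q0 \<and> last vs = q)"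

definition coaccessible :: "'q set \<Rightarrow> 'a set \<Rightarrow> ('q \<Rightarrow> 'a \<Rightarrow> 'q) \<Rightarrow> 'q set \<Rightarrow> 'q \<Rightarrow> bool" where
  "coaccessible Q A \<delta> F q \<longleftrightarrow> (\<exists>vs. is_path Q A \<delta> vs \<and> hd vs = q \<and> last vs \<in> F)"

definition semi_flower :: "'q set \<Rightarrow> 'a set \<Rightarrow> ('q \<Rightarrow> 'a \<Rightarrow> 'q) \<Rightarrow> 'q \<Rightarrow> 'q set \<Rightarrow> bool" where
  "semi_flower Q A \<delta> q0 F \<longleftrightarrow> automaton Q A \<delta> q0 F \<and> F = {q0} \<and>
     (\<forall>q\<in>Q. accessible Q A \<delta> q0 q \<and> coaccessible Q A \<delta> F q) \<and>
     (\<forall>vs. is_cycle Q A \<delta> vs \<longrightarrow> q0 \<in> set vs)"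

definition circular_perm :: "'q set \<Rightarrow> ('q \<Rightarrow> 'q) \<Rightarrow> bool" where
  "circular_perm Q f \<longleftrightarrow> bij_betw f Q Q \<and> (\<forall>p\<in>Q. {(f ^^ k) p | k. True} = Q)"

definition circular :: "'q set \<Rightarrow> 'a set \<Rightarrow> ('q \<Rightarrow> 'a \<Rightarrow> 'q) \<Rightarrow> bool" where
  "circular Q A \<delta> \<longleftrightarrow> (\<exists>a\<in>A. circular_perm Q (\<lambda>p. \<delta> p a))"

definition synchronizing :: "'q set \<Rightarrow> 'a set \<Rightarrow> ('q \<Rightarrow> 'a \<Rightarrow> 'q) \<Rightarrow> bool" where
  "synchronizing Q A \<delta> \<longleftrightarrow> (\<exists>w\<in>lists A. \<exists>s. (\<lambda>q. delta_star \<delta> q w) ` Q = {s})"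

end

theory Submission
  imports Defs
begin

lemma delta_star_rep: "delta_star \<delta> q (replicate k c) = ((\<lambda>p. \<delta> p c) ^^ k) q"
proof (induction k arbitrary: q)
  case (Suc k)
  then show ?case using funpow_swap1[of "\<lambda>p. \<delta> p c" k q] by (simp add: delta_star_def)
qed (simp add: delta_star_def)

lemma delta_star_append: "delta_star \<delta> q (xs @ ys) = delta_star \<delta> (delta_star \<delta> q xs) ys"
  by (simp add: delta_star_def)

lemma funpow_in: "(\<forall>x\<in>Q. g x \<in> Q) \<Longrightarrow> q \<in> Q \<Longrightarrow> (g ^^ k) q \<in> Q"
  by (induction k) auto

lemma cycle_sub: "is_cycle Q {b} \<delta> vs \<Longrightarrow> b \<in> A \<Longrightarrow> is_cycle Q A \<delta> vs"
  unfolding is_cycle_def is_walk_def edge_def by auto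

lemma reach_q0:
  assumes fin: "finite Q" and gQ: "\<forall>x\<in>Q. \<delta> x b \<in> Q"
    and cyc: "\<forall>vs. is_cycle Q {b} \<delta> vs \<longrightarrow> q0 \<in> set vs" and qQ: "q \<in> Q"
  shows "\<exists>k. ((\<lambda>p. \<delta> p b) ^^ k) q = q0"
proof -
  define h where "h k = ((\<lambda>p. \<delta> p b) ^^ k) q" for k
  have hQ: "h k \<in> Q" for k unfolding h_def using funpow_in[OF _ qQ, of "\<lambda>p. \<delta> p b"] gQ by auto
  have hS: "h (Suc k) = \<delta> (h k) b" for k by (simp add: h_def)
  have "\<not> inj_on h {0..card Q}"
  proof
    assume "inj_on h {0..card Q}"
    hence "card (h ` {0..card Q}) = card Q + 1" by (simp add: card_image)
    moreover have "card (h ` {0..card Q}) \<le> card Q"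
      using hQ fin by (intro card_mono) auto
    ultimately show False by simp
  qed
  then obtain i j where "i \<noteq> j" "h i = h j" unfolding inj_on_def by auto
  hence ex: "\<exists>j. \<exists>i<j. h i = h j"
    by (metis linorder_neqE_nat)
  define j0 where "j0 = (LEAST j. \<exists>i<j. h i = h j)"
  obtain i0 where i0: "i0 < j0" "h i0 = h j0"
    using LeastI_ex[OF ex] unfolding j0_def by blast
  have dist: "h k \<noteq> h l" if "k < l" "l < j0" for k l
    using not_less_Least[of l "\<lambda>j. \<exists>i<j. h i = h j"] that unfolding j0_def by blast
  define vs where "vs = map h [i0..<Suc j0]"
  have len: "length vs = Suc j0 - i0" using i0 by (simp add: vs_def)
  have nth: "vs ! m = h (i0 + m)" if "m < length vs" for m
    using that len unfolding vs_def by (simp del: upt_Suc add: nth_upt)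
  have "is_cycle Q {b} \<delta> vs"
    unfolding is_cycle_def is_walk_def
  proof (intro conjI allI impI)
    show "vs \<noteq> []" using i0 by (simp add: vs_def)
    show "set vs \<subseteq> Q" using hQ by (auto simp: vs_def)
    show "edge Q {b} \<delta> (vs ! m) (vs ! Suc m)" if "Suc m < length vs" for m
      using that nth[of m] nth[of "Suc m"] hQ hS by (simp add: edge_def)
    show "2 \<le> length vs" using len i0 by simp
    show "hd vs = last vs" using i0 by (simp add: vs_def hd_map last_map)
    have "butlast vs = map h [i0..<j0]" by (simp add: vs_def map_butlast[symmetric])
    moreover have "inj_on h {i0..<j0}"
      unfolding inj_on_def using dist by (metis atLeastLessThan_iff linorder_neqE_nat)
    ultimately show "distinct (butlast vs)" by (simp add: distinct_map)
  qed
  hence "q0 \<in> set vs" using cyc by blast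
  thus ?thesis by (auto simp: vs_def h_def)
qed

theorem mainTheorem3:
  fixes Q :: "'q set" and A :: "'a set" and \<delta> :: "'q \<Rightarrow> 'a \<Rightarrow> 'q"
    and q0 :: 'q and F :: "'q set" and n :: nat and b :: 'a
  assumes "odd n" and "n > 1"
    and "semi_flower Q A \<delta> q0 F"
    and "circular Q A \<delta>"
    and "card Q = n"
    and "b \<in> A"
    and "\<exists>vs. is_cycle Q {b} \<delta> vs \<and> length vs - 1 = 2"
  shows "synchronizing Q A \<delta>"
proof -
  have aut: "automaton Q A \<delta> q0 F" and cyc: "\<forall>vs. is_cycle Q A \<delta> vs \<longrightarrow> q0 \<in> set vs"
    using assms(3) unfolding semi_flower_def by auto
  have finQ: "finite Q" and q0Q: "q0 \<in> Q" and Qne: "Q \<noteq> {}"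
    and clos: "\<forall>p\<in>Q. \<forall>c\<in>A. \<delta> p c \<in> Q"
    using aut unfolding automaton_def by auto
  define g where "g = (\<lambda>p. \<delta> p b)"
  have gQ: "\<forall>x\<in>Q. g x \<in> Q" using clos assms(6) by (simp add: g_def)
  have cycb: "\<forall>vs. is_cycle Q {b} \<delta> vs \<longrightarrow> q0 \<in> set vs"
  proof (intro allI impI)
    fix vs assume "is_cycle Q {b} \<delta> vs"
    hence "is_cycle Q A \<delta> vs" by (rule cycle_sub[OF _ assms(6)])
    thus "q0 \<in> set vs" using cyc by simp
  qed
  obtain vs where vs0: "is_cycle Q {b} \<delta> vs" "length vs - 1 = 2"
    using assms(7) by blast
  have "length vs = 3" using vs0 by simp
  hence "\<exists>u v z. vs = [u, v, z]"
    by (cases vs; cases "tl vs"; cases "tl (tl vs)"; simp)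
  then obtain u v z where vsq: "vs = [u, v, z]" by blast
  have e0: "g u = v" and e1: "g v = z"
  proof -
    have W: "\<forall>i. Suc i < length vs \<longrightarrow> edge Q {b} \<delta> (vs ! i) (vs ! Suc i)"
      using vs0(1) unfolding is_cycle_def is_walk_def by blast
    show "g u = v" using W[rule_format, of 0] unfolding vsq edge_def g_def by simp
    show "g v = z" using W[rule_format, of 1] unfolding vsq edge_def g_def by simp
  qed
  have e2: "z = u" using vs0(1) unfolding is_cycle_def vsq by simp
  have "q0 \<in> set vs" using cycb vs0 by blast
  hence "q0 = u \<or> q0 = v" using e2 vsq by auto
  then obtain p where gq0: "g q0 = p" and gp: "g p = q0"
    using e0 e1 e2 by auto
  have pQ: "p \<in> Q" using gq0 gQ q0Q by auto
  have cyc2: "(g ^^ k) q0 \<in> {q0, p}" for k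
  proof (induction k)
    case (Suc k)
    then show ?case using gq0 gp by (auto simp del: funpow.simps simp: funpow.simps(2) o_def)
  qed simp
  have "\<forall>q\<in>Q. \<exists>k. (g ^^ k) q = q0"
  proof
    fix q assume "q \<in> Q"
    from reach_q0[OF finQ _ cycb this] gQ show "\<exists>k. (g ^^ k) q = q0" unfolding g_def by simp
  qed
  from bchoice[OF this] obtain K where K: "\<forall>q\<in>Q. (g ^^ (K q)) q = q0" by blast
  define N where "N = (\<Sum>q\<in>Q. K q)"
  have KN: "K q \<le> N" if "q \<in> Q" for q
    unfolding N_def using finQ that by (simp add: member_le_sum)
  define c where "c y = (g ^^ N) y" for y
  have cin: "c q \<in> {q0, p}" if "q \<in> Q" for q
  proof -
    have "N = (N - K q) + K q" using KN[OF that] by simp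
    hence "c q = (g ^^ ((N - K q) + K q)) q" unfolding c_def by simp
    hence "c q = (g ^^ (N - K q)) ((g ^^ K q) q)" by (simp only: funpow_add comp_apply)
    thus ?thesis using K that cyc2 by simp
  qed
  obtain a where aA: "a \<in> A" and circ: "circular_perm Q (\<lambda>p. \<delta> p a)"
    using assms(4) unfolding circular_def by blast
  define f where "f = (\<lambda>p. \<delta> p a)"
  have bij: "bij_betw f Q Q" and orb: "{(f ^^ k) q0 | k. True} = Q"
    using circ q0Q unfolding circular_perm_def f_def by auto
  obtain m where pm: "p = (f ^^ m) q0" using orb pQ by blast
  define Fm where "Fm = f ^^ m"
  have bijF: "bij_betw Fm Q Q" unfolding Fm_def by (rule bij_betw_funpow[OF bij])
  have "\<exists>y\<in>Q. c y = c (Fm y)"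
  proof (rule ccontr)
    assume H: "\<not> ?thesis"
    define S where "S = {y\<in>Q. c y = q0}"
    define T where "T = {y\<in>Q. c y \<noteq> q0}"
    have FQ: "Fm y \<in> Q" if "y \<in> Q" for y using bijF that by (meson bij_betwE)
    have inj: "inj_on Fm Q" using bijF by (simp add: bij_betw_def)
    have ST: "Fm ` S \<subseteq> T" using H FQ unfolding S_def T_def by auto
    have TS: "Fm ` T \<subseteq> S"
    proof
      fix z assume "z \<in> Fm ` T"
      then obtain y where y: "y \<in> T" "z = Fm y" by auto
      have "c y = p" using cin[of y] y unfolding T_def by auto
      moreover have "c z \<noteq> c y" using H y unfolding T_def by auto
      moreover have "z \<in> Q" using FQ y unfolding T_def by auto
      ultimately show "z \<in> S" using cin[of z] unfolding S_def by auto
    qed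
    have fS: "finite S" "finite T" using finQ unfolding S_def T_def by auto
    have "card S \<le> card T"
      by (rule card_inj_on_le[OF inj_on_subset[OF inj] ST fS(2)]) (auto simp: S_def)
    moreover have "card T \<le> card S"
      by (rule card_inj_on_le[OF inj_on_subset[OF inj] TS fS(1)]) (auto simp: T_def)
    moreover have "card Q = card S + card T"
    proof -
      have "Q = S \<union> T" "S \<inter> T = {}" unfolding S_def T_def by auto
      thus ?thesis using fS by (simp add: card_Un_disjoint)
    qed
    ultimately have "n = 2 * card S" using assms(5) by simp
    thus False using assms(1) by simp
  qed
  then obtain y where yQ: "y \<in> Q" and cy: "c y = c (Fm y)" by blast
  obtain x where yx: "y = (f ^^ x) q0" using orb yQ by blast
  define w where "w = replicate N b @ replicate x a @ replicate N b"
  have wA: "w \<in> lists A" unfolding w_def using assms(6) aA by auto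
  have "delta_star \<delta> q w = c y" if qQ: "q \<in> Q" for q
  proof -
    have dw: "delta_star \<delta> q w = c ((f ^^ x) (c q))"
    proof -
      have "delta_star \<delta> q w = delta_star \<delta> (delta_star \<delta> (delta_star \<delta> q (replicate N b)) (replicate x a)) (replicate N b)"
        unfolding w_def delta_star_append ..
      also have "\<dots> = (g ^^ N) ((f ^^ x) ((g ^^ N) q))"
        unfolding delta_star_rep g_def f_def ..
      finally show ?thesis unfolding c_def .
    qed
    have "(f ^^ x) (c q) \<in> {y, Fm y}"
    proof -
      have "(f ^^ x) p = (f ^^ (x + m)) q0" unfolding pm by (simp only: funpow_add comp_apply)
      also have "\<dots> = Fm y" unfolding yx Fm_def by (simp only: add.commute[of x m] funpow_add comp_apply)
      finally have "(f ^^ x) p = Fm y" .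
      thus ?thesis using cin[OF qQ] yx by auto
    qed
    thus ?thesis using dw cy by auto
  qed
  hence "(\<lambda>q. delta_star \<delta> q w) ` Q = {c y}" using Qne by auto
  thus ?thesis unfolding synchronizing_def using wA by blast
qed

end
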